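(* If $S\subseteq\mathbb N^d$ is a PI-monoid, then there exist a unique submonoid $T$ of $\mathbb N^d$ and a unique $\mathbf a\in T\setminus\{0\}$ such that $S=(\mathbf a+T)\cup\{0\}$.
   Context: A submonoid $S$ of $\mathbb N^d$ is a PI-monoid if there exist a submonoid $T$ of $\mathbb N^d$ and $\mathbf a\in T\setminus\{0\}$ with $S=(\mathbf a+T)\cup\{0\}$. *)

theory Defs
  imports "HOL-Analysis.Analysis"
begin

text \<open>Elements of N^d are modelled as vectors nat ^ 'd, with 'd a finite index type
(d = CARD('d)). Addition and zero are componentwise.\<close>

definition submonoid :: "(nat ^ 'd) set \<Rightarrow> bool" where
  "submonoid T \<longleftrightarrow> 0 \<in> T \<and> (\<forall>x\<in>T. \<forall>y\<in>T. x + y \<in> T)"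

definition PI_monoid :: "(nat ^ 'd) set \<Rightarrow> bool" where
  "PI_monoid S \<longleftrightarrow> submonoid S \<and>
     (\<exists>T a. submonoid T \<and> a \<in> T \<and> a \<noteq> 0 \<and> S = ((\<lambda>t. a + t) ` T) \<union> {0})"

end

theory Submission
  imports Defs
begin

lemma vec_add_nz: "(a::nat^'d) \<noteq> 0 \<Longrightarrow> a + x \<noteq> 0"
  by (auto simp: vec_eq_iff)

lemma vec_cancel: "(a::nat^'d) + x = a + y \<Longrightarrow> x = y"
  by (auto simp: vec_eq_iff)

lemma vec_sum0: "(a::nat^'d) = a + t + u \<Longrightarrow> t = 0"
  by (auto simp: vec_eq_iff)

lemma uniq:
  fixes T U :: "(nat^'d) set"
  assumes T: "submonoid T" "a \<in> T" "a \<noteq> 0" and S1: "S = ((\<lambda>t. a + t) ` T) \<union> {0}"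
    and U: "submonoid U" "b \<in> U" "b \<noteq> 0" and S2: "S = ((\<lambda>t. b + t) ` U) \<union> {0}"
  shows "b = a \<and> U = T"
proof -
  have "b + 0 \<in> S" using U S2 unfolding submonoid_def by blast
  then obtain t where t: "b = a + t" using S1 U(3) by auto
  have "a + 0 \<in> S" using T S1 unfolding submonoid_def by blast
  then obtain u where u: "a = b + u" using S2 T(3) by auto
  have "t = 0" by (rule vec_sum0[of a t u]) (rule u[unfolded t])
  hence ba: "b = a" using t by simp
  have "U \<subseteq> T"
  proof
    fix x assume "x \<in> U"
    hence "a + x \<in> S" using S2 ba by auto
    moreover have "a + x \<noteq> 0" using T(3) vec_add_nz by blast
    ultimately obtain y where "y \<in> T" "a + x = a + y" using S1 by auto
    thus "x \<in> T" using vec_cancel by metis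
  qed
  moreover have "T \<subseteq> U"
  proof
    fix x assume "x \<in> T"
    hence "a + x \<in> S" using S1 by auto
    moreover have "a + x \<noteq> 0" using T(3) vec_add_nz by blast
    ultimately obtain y where "y \<in> U" "a + x = a + y" using S2 ba by auto
    thus "x \<in> U" using vec_cancel by metis
  qed
  ultimately show ?thesis using ba by blast
qed

theorem corollary5p6:
  fixes S :: "(nat ^ 'd) set"
  assumes "PI_monoid S"
  shows "\<exists>!p :: (nat ^ 'd) set \<times> (nat ^ 'd).
           submonoid (fst p) \<and> snd p \<in> fst p \<and> snd p \<noteq> 0 \<and>
           S = ((\<lambda>t. snd p + t) ` fst p) \<union> {0}"
proof -
  obtain T a where T: "submonoid T" "a \<in> T" "a \<noteq> 0" "S = ((\<lambda>t. a + t) ` T) \<union> {0}"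
    using assms unfolding PI_monoid_def by blast
  show ?thesis
  proof (rule ex1I[of _ "(T, a)"])
    show "submonoid (fst (T, a)) \<and> snd (T, a) \<in> fst (T, a) \<and> snd (T, a) \<noteq> 0 \<and>
          S = (\<lambda>t. snd (T, a) + t) ` fst (T, a) \<union> {0}" using T by simp
  next
    fix p :: "(nat ^ 'd) set \<times> (nat ^ 'd)"
    assume p: "submonoid (fst p) \<and> snd p \<in> fst p \<and> snd p \<noteq> 0 \<and>
           S = ((\<lambda>t. snd p + t) ` fst p) \<union> {0}"
    have "snd p = a \<and> fst p = T" using uniq[OF T(1-4)] p by blast
    thus "p = (T, a)" by (cases p) auto
  qed
qed

end
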